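(* Let $t\ge 3$ and let $\mathcal{A}=\{A_1,\ldots,A_\alpha\}$ be a nontrivial clutter on $E_t=\{1,\ldots,t\}$. Then (i) $\boldsymbol{\gamma}(\mathcal{A}^{\triangledown})=\mathrm{T}^{(+)}_{2^t}-\prod^{\ast}_{i\in[\alpha]}\Bigl(\mathrm{T}^{(+)}_{2^t}-\prod^{\ast}_{a\in A_i}\tfrac12\bigl(\mathrm{T}^{(+)}_{2^t}-\boldsymbol{x}(\boldsymbol{\mathfrak{a}}(a))\cdot\mathbf{M}\bigr)\Bigr)$; (ii) $\boldsymbol{\gamma}(\mathfrak{B}(\mathcal{A})^{\triangledown})=\Bigl(\prod^{\ast}_{i\in[\alpha]}\Bigl(\mathrm{T}^{(+)}_{2^t}-\prod^{\ast}_{a\in A_i}\tfrac12\bigl(\mathrm{T}^{(+)}_{2^t}-\boldsymbol{x}(\boldsymbol{\mathfrak{a}}(a))\cdot\mathbf{M}\bigr)\Bigr)\Bigr)\cdot\overline{\mathbf{U}}(2^t)$.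
   Context: A clutter on $E_t$ is a family of subsets of $E_t$ none of which contains another; nontrivial means neither the empty family nor $\{\emptyset\}$. $\mathcal{C}^{\triangledown}:=\{D\subseteq E_t: D\supseteq C\text{ for some }C\in\mathcal{C}\}$; the blocker $\mathfrak{B}(\mathcal{A})$ is the family of inclusion-minimal sets meeting every member of $\mathcal{A}$. Order the $2^t$ subsets of $E_t$ by increasing cardinality, lexicographically within equal cardinality; $\boldsymbol{\gamma}(\mathcal{F})\in\{0,1\}^{2^t}$ has $k$-th entry $1$ iff the $k$-th subset lies in $\mathcal{F}$; $T_{\mathcal{F}}:=\mathrm{T}^{(+)}_{2^t}-2\boldsymbol{\gamma}(\mathcal{F})$, with $\mathrm{T}^{(+)}_{2^t}$ the all-ones row vector. For $a\in E_t$, $\boldsymbol{\mathfrak{a}}(a):=T_{\{\{a\}\}^{\triangledown}}$ (characteristic tope of the family of all subsets containing $a$). $\mathbf{M}$ is the $2^t\times 2^t$ matrix whose rows are $R^0,\ldots,R^{2^t-1}$, where $R^0:=\mathrm{T}^{(+)}_{2^t}$ and $R^s$ ($1\le s\le 2^t-1$) has entries $-1$ in positions $1,\ldots,s$ and $1$ elsewhere; for $T\in\{1,-1\}^{2^t}$, $\boldsymbol{x}(T):=T\mathbf{M}^{-1}$ (the unique vector with $T=\boldsymbol{x}(T)\mathbf{M}$). $\prod^{\ast}$ is the componentwise product; $\overline{\mathbf{U}}(2^t)$ is the backward identity matrix of order $2^t$ ($(i,j)$ entry $\delta_{i+j,2^t+1}$). *)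

theory Defs
  imports "Jordan_Normal_Form.Matrix" "HOL-Library.List_Lexorder" "HOL-Library.Product_Lexorder"
begin

(* Indices of vectors/matrices are 0-based here: paper position k (1..2^t) is index k-1. *)

definition clutter :: "nat \<Rightarrow> nat set set \<Rightarrow> bool" where
  "clutter t \<A> \<longleftrightarrow> (\<forall>A\<in>\<A>. A \<subseteq> {1..t}) \<and> (\<forall>A\<in>\<A>. \<forall>B\<in>\<A>. A \<subseteq> B \<longrightarrow> A = B)"

definition nontrivial_clutter :: "nat \<Rightarrow> nat set set \<Rightarrow> bool" where
  "nontrivial_clutter t \<A> \<longleftrightarrow> clutter t \<A> \<and> \<A> \<noteq> {} \<and> \<A> \<noteq> {{}}"

definition up :: "nat \<Rightarrow> nat set set \<Rightarrow> nat set set" where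
  "up t \<C> = {D. D \<subseteq> {1..t} \<and> (\<exists>C\<in>\<C>. C \<subseteq> D)}"

definition blocker :: "nat \<Rightarrow> nat set set \<Rightarrow> nat set set" where
  "blocker t \<A> = {B. B \<subseteq> {1..t} \<and> (\<forall>A\<in>\<A>. B \<inter> A \<noteq> {})
      \<and> (\<forall>B'. B' \<subset> B \<longrightarrow> \<not> (\<forall>A\<in>\<A>. B' \<inter> A \<noteq> {}))}"

definition subset_enum :: "nat \<Rightarrow> nat list list" where
  "subset_enum t = sort_key (\<lambda>xs. (length xs, xs)) (subseqs [1..<t+1])"

definition kth_subset :: "nat \<Rightarrow> nat \<Rightarrow> nat set" where
  "kth_subset t k = set (subset_enum t ! k)"

definition gamma :: "nat \<Rightarrow> nat set set \<Rightarrow> real vec" where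
  "gamma t \<F> = vec (2^t) (\<lambda>k. if kth_subset t k \<in> \<F> then 1 else 0)"

definition Tplus :: "nat \<Rightarrow> real vec" where
  "Tplus t = vec (2^t) (\<lambda>_. 1)"

definition tope :: "nat \<Rightarrow> nat set set \<Rightarrow> real vec" where
  "tope t \<F> = Tplus t - 2 \<cdot>\<^sub>v gamma t \<F>"

definition afrak :: "nat \<Rightarrow> nat \<Rightarrow> real vec" where
  "afrak t a = tope t (up t {{a}})"

definition vecmat :: "real vec \<Rightarrow> real mat \<Rightarrow> real vec" where
  "vecmat v M = vec (dim_col M) (\<lambda>j. v \<bullet> col M j)"

definition Mmat :: "nat \<Rightarrow> real mat" where
  "Mmat t = mat (2^t) (2^t) (\<lambda>(s,j). if j < s then -1 else 1)"

definition xvec :: "nat \<Rightarrow> real vec \<Rightarrow> real vec" where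
  "xvec t T = (THE x. x \<in> carrier_vec (2^t) \<and> T = vecmat x (Mmat t))"

definition cprod :: "nat \<Rightarrow> 'i set \<Rightarrow> ('i \<Rightarrow> real vec) \<Rightarrow> real vec" where
  "cprod n I f = vec n (\<lambda>k. \<Prod>i\<in>I. f i $ k)"

definition Ubar :: "nat \<Rightarrow> real mat" where
  "Ubar t = mat (2^t) (2^t) (\<lambda>(i,j). if i + j = 2^t - 1 then 1 else 0)"

end

theory Submission
  imports Defs
begin


lemma lex_sorted:
  fixes xs ys :: "nat list"
  shows "sorted_wrt (<) xs \<Longrightarrow> sorted_wrt (<) ys \<Longrightarrow> length xs = length ys \<Longrightarrow> xs \<noteq> ys \<Longrightarrow>
    (xs < ys \<longleftrightarrow> (\<exists>m \<in> set xs - set ys. \<forall>z \<in> (set xs - set ys) \<union> (set ys - set xs). m \<le> z))"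
proof (induction xs arbitrary: ys)
  case Nil
  then show ?case by simp
next
  case (Cons x xs)
  then obtain y ys' where ys: "ys = y # ys'" by (cases ys) auto
  have sx: "\<forall>z\<in>set xs. x < z" "sorted_wrt (<) xs" using Cons.prems(1) by simp_all
  have sy: "\<forall>z\<in>set ys'. y < z" "sorted_wrt (<) ys'" using Cons.prems(2) ys by simp_all
  consider "x = y" | "x < y" | "y < x" by linarith
  then show ?case
  proof cases
    case 1
    have e1: "set (x#xs) - set ys = set xs - set ys'" "set ys - set (x#xs) = set ys' - set xs"
      using sx sy 1 ys by auto
    have ne: "xs \<noteq> ys'" using Cons.prems(4) 1 ys by simp
    have len: "length xs = length ys'" using Cons.prems(3) ys by simp
    have IH: "xs < ys' \<longleftrightarrow> (\<exists>m \<in> set xs - set ys'. \<forall>z \<in> (set xs - set ys') \<union> (set ys' - set xs). m \<le> z)"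
      using Cons.IH[OF sx(2) sy(2) len ne] .
    have lt: "x#xs < ys \<longleftrightarrow> xs < ys'" using 1 ys by simp
    have r: "(\<exists>m \<in> set (x#xs) - set ys. \<forall>z \<in> (set (x#xs) - set ys) \<union> (set ys - set (x#xs)). m \<le> z)
        \<longleftrightarrow> (\<exists>m \<in> set xs - set ys'. \<forall>z \<in> (set xs - set ys') \<union> (set ys' - set xs). m \<le> z)"
      by (simp only: e1)
    show ?thesis using IH lt r by blast
  next
    case 2
    have lt: "x#xs < ys" using 2 ys by simp
    have xn: "x \<notin> set ys" using sy 2 ys by auto
    have "\<forall>z \<in> (set (x#xs) - set ys) \<union> (set ys - set (x#xs)). x \<le> z"
    proof
      fix z assume "z \<in> (set (x#xs) - set ys) \<union> (set ys - set (x#xs))"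
      then have "z \<in> set (x#xs) \<or> z \<in> set ys" by blast
      then show "x \<le> z" using sx sy 2 ys by auto
    qed
    then have "\<exists>m \<in> set (x#xs) - set ys. \<forall>z \<in> (set (x#xs) - set ys) \<union> (set ys - set (x#xs)). m \<le> z"
      using xn by (intro bexI[of _ x]) auto
    then show ?thesis using lt by blast
  next
    case 3
    have lt: "\<not> x#xs < ys" using 3 ys by simp
    have yn: "y \<in> set ys - set (x#xs)" using sx 3 ys by auto
    have "\<not> (\<exists>m \<in> set (x#xs) - set ys. \<forall>z \<in> (set (x#xs) - set ys) \<union> (set ys - set (x#xs)). m \<le> z)"
    proof
      assume "\<exists>m \<in> set (x#xs) - set ys. \<forall>z \<in> (set (x#xs) - set ys) \<union> (set ys - set (x#xs)). m \<le> z"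
      then obtain m where m: "m \<in> set (x#xs)" "\<forall>z \<in> (set (x#xs) - set ys) \<union> (set ys - set (x#xs)). m \<le> z"
        by blast
      have "x \<le> m" using m(1) sx by auto
      moreover have "m \<le> y" using m(2) yn by blast
      ultimately show False using 3 by simp
    qed
    then show ?thesis using lt by blast
  qed
qed




definition Sset :: "nat \<Rightarrow> nat list set" where
  "Sset t = {ys. sorted_wrt (<) ys \<and> set ys \<subseteq> {1..t}}"

definition cmp :: "nat \<Rightarrow> nat list \<Rightarrow> nat list" where
  "cmp t ys = sorted_list_of_set ({1..t} - set ys)"

definition key :: "nat list \<Rightarrow> nat \<times> nat list" where
  "key = (\<lambda>xs. (length xs, xs))"

lemma subseq_sorted:
  "ys \<in> set (subseqs xs) \<Longrightarrow> sorted_wrt (<) xs \<Longrightarrow> sorted_wrt ((<)::nat\<Rightarrow>nat\<Rightarrow>bool) ys"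
proof (induction xs arbitrary: ys)
  case Nil then show ?case by simp
next
  case (Cons x xs)
  show ?case
  proof (cases "ys \<in> set (subseqs xs)")
    case True then show ?thesis using Cons by simp
  next
    case False
    then obtain zs where zs: "ys = x # zs" "zs \<in> set (subseqs xs)" using Cons.prems by (auto simp: Let_def)
    have "set zs \<in> set ` set (subseqs xs)" using zs(2) by (rule imageI)
    then have "set zs \<subseteq> set xs" unfolding subseqs_powset by simp
    then show ?thesis using Cons zs by auto
  qed
qed

lemma set_enum: "set (subset_enum t) = Sset t"
proof
  show "set (subset_enum t) \<subseteq> Sset t"
  proof
    fix ys assume "ys \<in> set (subset_enum t)"
    then have h: "ys \<in> set (subseqs [1..<t+1])" unfolding subset_enum_def by simp
    have "sorted_wrt (<) [1..<t+1]" by (rule sorted_wrt_upt)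
    then have "sorted_wrt (<) ys" using subseq_sorted[OF h] by blast
    moreover have "set ys \<in> set ` set (subseqs [1..<t+1])" using h by (rule imageI)
    then have "set ys \<subseteq> set [1..<t+1]" unfolding subseqs_powset by simp
    ultimately show "ys \<in> Sset t" unfolding Sset_def by auto
  qed
next
  show "Sset t \<subseteq> set (subset_enum t)"
  proof
    fix ys assume "ys \<in> Sset t"
    then have ys: "sorted_wrt (<) ys" "set ys \<subseteq> set [1..<t+1]" unfolding Sset_def by auto
    obtain zs where zs: "zs \<in> set (subseqs [1..<t+1])" "set ys = set zs"
      using subset_subseqs[OF ys(2)] by (auto elim!: imageE)
    have "sorted_wrt (<) zs" using subseq_sorted[OF zs(1) sorted_wrt_upt] .
    then have "zs = ys" using strict_sorted_equal[OF ys(1) _ zs(2)[symmetric]] by blast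
    then show "ys \<in> set (subset_enum t)" using zs(1) unfolding subset_enum_def set_sort by blast
  qed
qed

lemma distinct_enum: "distinct (subset_enum t)"
  unfolding subset_enum_def distinct_sort
  by (rule distinct_map[THEN iffD1, THEN conjunct1], rule distinct_set_subseqs, rule distinct_upt)

lemma length_enum: "length (subset_enum t) = 2^t"
  unfolding subset_enum_def length_sort length_subseqs length_upt by simp

lemma cmp_props:
  assumes "ys \<in> Sset t"
  shows "cmp t ys \<in> Sset t" "set (cmp t ys) = {1..t} - set ys" "cmp t (cmp t ys) = ys"
    "length (cmp t ys) = t - length ys"
proof -
  show s: "set (cmp t ys) = {1..t} - set ys" unfolding cmp_def by simp
  show "cmp t ys \<in> Sset t" unfolding Sset_def cmp_def by auto
  have ss: "sorted_wrt (<) ys" "set ys \<subseteq> {1..t}" using assms unfolding Sset_def by auto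
  have "{1..t} - ({1..t} - set ys) = set ys" using ss by auto
  then have "cmp t (cmp t ys) = sorted_list_of_set (set ys)" unfolding cmp_def s by simp
  also have "\<dots> = ys" using ss(1) strict_sorted_equal[OF ss(1)]
    by (metis finite_set sorted_list_of_set.set_sorted_key_list_of_set sorted_list_of_set.strict_sorted_key_list_of_set subset_UNIV)
  finally show "cmp t (cmp t ys) = ys" .
  have "distinct ys" using ss(1) strict_sorted_iff by blast
  then have "card (set ys) = length ys" by (simp add: distinct_card)
  moreover have "card ({1..t} - set ys) = t - card (set ys)" using ss(2) by (simp add: card_Diff_subset finite_subset)
  ultimately show "length (cmp t ys) = t - length ys" unfolding cmp_def by simp
qed



lemma cmp_rev:
  assumes "ys \<in> Sset t" "zs \<in> Sset t" "key ys < key zs"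
  shows "key (cmp t zs) < key (cmp t ys)"
proof -
  have ys: "sorted_wrt (<) ys" "set ys \<subseteq> {1..t}" and zs: "sorted_wrt (<) zs" "set zs \<subseteq> {1..t}"
    using assms unfolding Sset_def by auto
  have ly: "length ys \<le> t"
    using ys card_mono[of "{1..t}" "set ys"] distinct_card[of ys] strict_sorted_iff by fastforce
  have lz: "length zs \<le> t"
    using zs card_mono[of "{1..t}" "set zs"] distinct_card[of zs] strict_sorted_iff by fastforce
  consider "length ys < length zs" | "length ys = length zs" "ys < zs" using assms(3) unfolding key_def by (auto simp: le_less)
  then show ?thesis
  proof cases
    case 1
    have "t - length zs < t - length ys" using 1 lz by linarith
    then show ?thesis using cmp_props(4)[OF assms(1)] cmp_props(4)[OF assms(2)] unfolding key_def by simp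
  next
    case 2
    have ne: "ys \<noteq> zs" using 2(2) by (metis order.irrefl)
    have ex: "\<exists>m \<in> set ys - set zs. \<forall>z \<in> (set ys - set zs) \<union> (set zs - set ys). m \<le> z"
      by (rule iffD1[OF lex_sorted[OF ys(1) zs(1) 2(1) ne] 2(2)])
    then obtain m where m: "m \<in> set ys - set zs" "\<forall>z \<in> (set ys - set zs) \<union> (set zs - set ys). m \<le> z" by blast
    let ?a = "cmp t zs" and ?b = "cmp t ys"
    have sa: "set ?a = {1..t} - set zs" and sb: "set ?b = {1..t} - set ys"
      using cmp_props(2) assms by auto
    have d1: "set ?a - set ?b = set ys - set zs" using sa sb ys(2) zs(2) by auto
    have d2: "set ?b - set ?a = set zs - set ys" using sa sb ys(2) zs(2) by auto
    have la: "length ?a = length ?b" using cmp_props(4) assms 2(1) by simp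
    have sta: "sorted_wrt (<) ?a" "sorted_wrt (<) ?b"
      using cmp_props(1) assms unfolding Sset_def by auto
    have neab: "?a \<noteq> ?b" using d1 m(1) by (metis Diff_cancel empty_iff)
    have "?a < ?b" unfolding lex_sorted[OF sta la neab] d1 d2 using m by blast
    then show ?thesis using la unfolding key_def by simp
  qed
qed



lemma enum_rev:
  assumes "k < 2^t"
  shows "subset_enum t ! (2^t - 1 - k) = cmp t (subset_enum t ! k)"
proof -
  define L where "L = subset_enum t"
  define R where "R = rev (map (cmp t) L)"
  have sL: "set L = Sset t" unfolding L_def by (rule set_enum)
  have injk: "inj key" unfolding key_def inj_def by simp
  have so: "sorted (map key L)" unfolding L_def subset_enum_def key_def by (rule sorted_sort_key)
  have di: "distinct (map key L)" using distinct_enum[of t] injk unfolding L_def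
    by (simp add: distinct_map inj_on_def)
  have sk: "sorted_wrt (<) (map key L)" using so di strict_sorted_iff by blast
  then have s1: "sorted_wrt (\<lambda>a b. key a < key b) L" by (simp add: sorted_wrt_map)
  have s2: "sorted_wrt (\<lambda>a b. key (cmp t b) < key (cmp t a)) L"
  proof (rule sorted_wrt_mono_rel[OF _ s1])
    fix a b assume "a \<in> set L" "b \<in> set L" "key a < key b"
    then show "key (cmp t b) < key (cmp t a)" using cmp_rev[of a t b] sL by simp
  qed
  have sR: "sorted_wrt (<) (map key R)"
    unfolding R_def rev_map[symmetric] sorted_wrt_rev sorted_wrt_map using s2 by (simp add: sorted_wrt_map)
  have cS: "cmp t ` Sset t = Sset t"
  proof
    show "cmp t ` Sset t \<subseteq> Sset t" using cmp_props(1) by blast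
    show "Sset t \<subseteq> cmp t ` Sset t"
    proof
      fix y assume "y \<in> Sset t"
      then show "y \<in> cmp t ` Sset t" using cmp_props(1,3) by (metis image_eqI)
    qed
  qed
  have "set (map key R) = set (map key L)" unfolding R_def using cS sL by (simp add: image_image)
  then have "map key R = map key L" using strict_sorted_equal[OF sk sR] by simp
  then have RL: "R = L" using injk by (simp add: inj_map_eq_map)
  have len: "length L = 2^t" unfolding L_def by (rule length_enum)
  have "L ! (2^t - 1 - k) = R ! (2^t - 1 - k)" using RL by simp
  also have "\<dots> = map (cmp t) L ! (2^t - Suc (2^t - 1 - k))"
    unfolding R_def using assms len by (simp add: rev_nth)
  also have "2^t - Suc (2^t - 1 - k) = k" using assms by simp
  also have "map (cmp t) L ! k = cmp t (L ! k)" using assms len by simp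
  finally show ?thesis unfolding L_def .
qed



lemma kth_sub:
  assumes "k < 2^t" shows "kth_subset t k \<subseteq> {1..t}"
proof -
  have "subset_enum t ! k \<in> Sset t" using set_enum[of t] length_enum[of t] nth_mem[of k "subset_enum t"] assms
    by simp
  then show ?thesis unfolding kth_subset_def Sset_def by simp
qed

lemma kth_rev:
  assumes "k < 2^t" shows "kth_subset t (2^t - 1 - k) = {1..t} - kth_subset t k"
proof -
  have m: "subset_enum t ! k \<in> Sset t" using set_enum[of t] length_enum[of t] nth_mem[of k "subset_enum t"] assms
    by simp
  have "kth_subset t (2^t - 1 - k) = set (cmp t (subset_enum t ! k))"
    unfolding kth_subset_def using enum_rev[OF assms] by simp
  also have "\<dots> = {1..t} - kth_subset t k" unfolding kth_subset_def using cmp_props(2)[OF m] .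
  finally show ?thesis .
qed



lemma prod_indic:
  assumes "finite A"
  shows "(\<Prod>a\<in>A. if P a then 1 else (0::real)) = (if \<forall>a\<in>A. P a then 1 else 0)"
  using assms by (auto simp: prod_zero_iff)

lemma min_sub:
  assumes "finite D" "P D"
  shows "\<exists>B\<subseteq>D. P B \<and> (\<forall>B'. B' \<subset> B \<longrightarrow> \<not> P B')"
  using assms
proof (induction D rule: finite_psubset_induct)
  case (psubset A)
  show ?case
  proof (cases "\<forall>B'. B' \<subset> A \<longrightarrow> \<not> P B'")
    case True then show ?thesis using psubset by blast
  next
    case False
    then obtain B' where "B' \<subset> A" "P B'" by blast
    then obtain B where B: "B \<subseteq> B'" "P B" "\<forall>B''. B'' \<subset> B \<longrightarrow> \<not> P B''"
      using psubset.IH[of B'] by blast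
    have "B \<subseteq> A" using B(1) \<open>B' \<subset> A\<close> by auto
    then show ?thesis using B(2,3) by blast
  qed
qed

lemma up_blocker:
  assumes "D \<subseteq> {1..t}"
  shows "D \<in> up t (blocker t \<A>) \<longleftrightarrow> (\<forall>A\<in>\<A>. D \<inter> A \<noteq> {})"
proof
  assume "D \<in> up t (blocker t \<A>)"
  then obtain B where B: "B \<in> blocker t \<A>" "B \<subseteq> D" unfolding up_def by auto
  then have "\<forall>A\<in>\<A>. B \<inter> A \<noteq> {}" unfolding blocker_def by simp
  then show "\<forall>A\<in>\<A>. D \<inter> A \<noteq> {}" using B(2) by fast
next
  assume h: "\<forall>A\<in>\<A>. D \<inter> A \<noteq> {}"
  have "finite D" using assms finite_subset by blast
  from min_sub[OF this, of "\<lambda>B. \<forall>A\<in>\<A>. B \<inter> A \<noteq> {}"] h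
  obtain B where B: "B \<subseteq> D" "\<forall>A\<in>\<A>. B \<inter> A \<noteq> {}" "\<forall>B'. B' \<subset> B \<longrightarrow> \<not> (\<forall>A\<in>\<A>. B' \<inter> A \<noteq> {})"
    by blast
  have "B \<in> blocker t \<A>" unfolding blocker_def using B assms by simp
  then show "D \<in> up t (blocker t \<A>)" using assms B(1) unfolding up_def by auto
qed



definition Mn :: "nat \<Rightarrow> real mat" where
  "Mn n = mat n n (\<lambda>(s,j). if j < s then -1 else 1)"

lemma vecmat_Mn:
  assumes "x \<in> carrier_vec n" "j < n"
  shows "vecmat x (Mn n) $ j = 2 * (\<Sum>s<Suc j. x $ s) - (\<Sum>s<n. x $ s)"
proof -
  have "vecmat x (Mn n) $ j = x \<bullet> col (Mn n) j" using assms unfolding vecmat_def Mn_def by simp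
  also have "\<dots> = (\<Sum>s\<in>{0..<n}. x $ s * (if j < s then -1 else 1))"
    using assms unfolding Mn_def scalar_prod_def by (intro sum.cong) auto
  also have "\<dots> = (\<Sum>s\<in>{0..<n}. (if s \<le> j then 2 * x $ s else 0) - x $ s)"
    by (rule sum.cong) auto
  also have "\<dots> = (\<Sum>s\<in>{0..<n}. (if s \<le> j then 2 * x $ s else 0)) - (\<Sum>s\<in>{0..<n}. x $ s)"
    by (rule sum_subtractf)
  also have "(\<Sum>s\<in>{0..<n}. (if s \<le> j then 2 * x $ s else 0)) = (\<Sum>s\<in>{0..<n} \<inter> {s. s \<le> j}. 2 * x $ s)"
    by (simp add: sum.inter_restrict)
  also have "{0..<n} \<inter> {s. s \<le> j} = {..<Suc j}" using assms by auto
  finally show ?thesis by (simp add: sum_distrib_left atLeast0LessThan)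
qed



lemma Mn_exists:
  assumes "T \<in> carrier_vec n" "0 < n"
  shows "\<exists>x. x \<in> carrier_vec n \<and> T = vecmat x (Mn n)"
proof -
  define x where "x = vec n (\<lambda>s. if s = 0 then (T$0 + T$(n-1))/2 else (T$s - T$(s-1))/2)"
  have xc: "x \<in> carrier_vec n" unfolding x_def by simp
  have P: "(\<Sum>s<Suc j. x $ s) = (T$j + T$(n-1))/2" if "j < n" for j
    using that
  proof (induction j)
    case 0 then show ?case unfolding x_def by simp
  next
    case (Suc j)
    then have "(\<Sum>s<Suc (Suc j). x $ s) = (T$j + T$(n-1))/2 + x $ Suc j" by simp
    also have "x $ Suc j = (T$(Suc j) - T$j)/2" unfolding x_def using Suc.prems by simp
    finally show ?case by (simp add: field_simps)
  qed
  have S: "(\<Sum>s<n. x $ s) = T$(n-1)"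
  proof -
    have "n = Suc (n-1)" using assms by simp
    then have "(\<Sum>s<n. x $ s) = (\<Sum>s<Suc (n-1). x $ s)" by simp
    also have "\<dots> = T$(n-1)" using P[of "n-1"] assms by simp
    finally show ?thesis .
  qed
  have "T = vecmat x (Mn n)"
  proof (rule eq_vecI)
    show "dim_vec T = dim_vec (vecmat x (Mn n))" using assms unfolding vecmat_def Mn_def by simp
    fix j assume "j < dim_vec (vecmat x (Mn n))"
    then have j: "j < n" unfolding vecmat_def Mn_def by simp
    show "T $ j = vecmat x (Mn n) $ j" using vecmat_Mn[OF xc j] P[OF j] S by simp
  qed
  then show ?thesis using xc by blast
qed

lemma Mn_unique:
  assumes "x \<in> carrier_vec n" "y \<in> carrier_vec n" "vecmat x (Mn n) = vecmat y (Mn n)"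
  shows "x = y"
proof (cases "n = 0")
  case True then show ?thesis using assms by auto
next
  case False
  have e: "2 * (\<Sum>s<Suc j. x $ s) - (\<Sum>s<n. x $ s) = 2 * (\<Sum>s<Suc j. y $ s) - (\<Sum>s<n. y $ s)" if "j < n" for j
    using vecmat_Mn[OF assms(1) that] vecmat_Mn[OF assms(2) that] assms(3) by simp
  have nn: "Suc (n-1) = n" using False by simp
  have S: "(\<Sum>s<n. x $ s) = (\<Sum>s<n. y $ s)" using e[of "n-1"] False nn by simp
  have P: "(\<Sum>s<Suc j. x $ s) = (\<Sum>s<Suc j. y $ s)" if "j < n" for j using e[OF that] S by simp
  show ?thesis
  proof (rule eq_vecI)
    show "dim_vec x = dim_vec y" using assms by simp
    fix s assume "s < dim_vec y"
    then have s: "s < n" using assms by simp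
    show "x $ s = y $ s"
    proof (cases s)
      case 0 then show ?thesis using P[of 0] s by simp
    next
      case (Suc r)
      have "x $ s = (\<Sum>i<Suc s. x $ i) - (\<Sum>i<Suc r. x $ i)" using Suc by simp
      also have "\<dots> = (\<Sum>i<Suc s. y $ i) - (\<Sum>i<Suc r. y $ i)" using P[OF s] P[of r] s Suc by simp
      also have "\<dots> = y $ s" using Suc by simp
      finally show ?thesis .
    qed
  qed
qed

lemma vecmat_xvec:
  assumes "T \<in> carrier_vec (2^t)"
  shows "vecmat (xvec t T) (Mmat t) = T"
proof -
  have M: "Mmat t = Mn (2^t)" unfolding Mmat_def Mn_def by simp
  have "\<exists>!x. x \<in> carrier_vec (2^t) \<and> T = vecmat x (Mmat t)"
    using Mn_exists[OF assms] Mn_unique unfolding M by auto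
  from theI'[OF this] show ?thesis unfolding xvec_def by simp
qed



lemma vecmat_Ubar:
  assumes "v \<in> carrier_vec (2^t)" "j < 2^t"
  shows "vecmat v (Ubar t) $ j = v $ (2^t - 1 - j)"
proof -
  have "vecmat v (Ubar t) $ j = v \<bullet> col (Ubar t) j" using assms unfolding vecmat_def Ubar_def by simp
  also have "\<dots> = (\<Sum>i\<in>{0..<2^t}. v $ i * (if i + j = 2^t - 1 then 1 else 0))"
    using assms unfolding Ubar_def scalar_prod_def by (intro sum.cong) auto
  also have "\<dots> = (\<Sum>i\<in>{0..<2^t}. if i = 2^t - 1 - j then v $ i else 0)"
    using assms by (intro sum.cong) auto
  also have "\<dots> = v $ (2^t - 1 - j)" using assms by (simp add: sum.delta')
  finally show ?thesis .
qed

lemma gamma_idx: "k < 2^t \<Longrightarrow> gamma t F $ k = (if kth_subset t k \<in> F then 1 else 0)"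
  unfolding gamma_def by simp

lemma g_idx:
  assumes "k < 2^t" "a \<in> {1..t}"
  shows "((1/2) \<cdot>\<^sub>v (Tplus t - vecmat (xvec t (afrak t a)) (Mmat t))) $ k
     = (if a \<in> kth_subset t k then 1 else 0)"
proof -
  have c: "afrak t a \<in> carrier_vec (2^t)" unfolding afrak_def tope_def Tplus_def gamma_def by simp
  have K: "kth_subset t k \<subseteq> {1..t}" using kth_sub[OF assms(1)] .
  have u: "kth_subset t k \<in> up t {{a}} \<longleftrightarrow> a \<in> kth_subset t k" using K unfolding up_def by auto
  show ?thesis unfolding vecmat_xvec[OF c] using assms u
    unfolding afrak_def tope_def Tplus_def gamma_def by simp
qed

theorem corollary6p6:
  fixes t :: nat and \<A> :: "nat set set"
  assumes "t \<ge> 3" and "nontrivial_clutter t \<A>"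
  shows "(gamma t (up t \<A>) =
           Tplus t - cprod (2^t) \<A> (\<lambda>A. Tplus t - cprod (2^t) A
              (\<lambda>a. (1/2) \<cdot>\<^sub>v (Tplus t - vecmat (xvec t (afrak t a)) (Mmat t)))))
         \<and> (gamma t (up t (blocker t \<A>)) =
           vecmat (cprod (2^t) \<A> (\<lambda>A. Tplus t - cprod (2^t) A
              (\<lambda>a. (1/2) \<cdot>\<^sub>v (Tplus t - vecmat (xvec t (afrak t a)) (Mmat t))))) (Ubar t))"
proof -
  define g where "g = (\<lambda>a. (1/2) \<cdot>\<^sub>v (Tplus t - vecmat (xvec t (afrak t a)) (Mmat t)))"
  define h where "h = (\<lambda>A. Tplus t - cprod (2^t) A g)"
  define P where "P = cprod (2^t) \<A> h"
  have Asub: "\<forall>A\<in>\<A>. A \<subseteq> {1..t}" using assms(2) unfolding nontrivial_clutter_def clutter_def by blast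
  have "\<A> \<subseteq> Pow {1..t}" using Asub by blast
  then have finA: "finite \<A>" by (rule finite_subset) simp
  have h_idx: "h A $ k = (if A \<subseteq> kth_subset t k then 0 else 1)" if "k < 2^t" "A \<in> \<A>" for k A
  proof -
    have As: "A \<subseteq> {1..t}" using Asub that(2) by blast
    have fin: "finite A" by (rule finite_subset[OF As finite_atLeastAtMost])
    have "cprod (2^t) A g $ k = (\<Prod>a\<in>A. g a $ k)"
      unfolding cprod_def using that(1) by simp
    also have "\<dots> = (\<Prod>a\<in>A. if a \<in> kth_subset t k then 1 else (0::real))"
    proof (rule prod.cong)
      fix a assume "a \<in> A"
      then have "a \<in> {1..t}" using As by blast
      then show "g a $ k = (if a \<in> kth_subset t k then 1 else (0::real))"
        unfolding g_def using g_idx[OF that(1)] by blast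
    qed simp
    also have "\<dots> = (if A \<subseteq> kth_subset t k then 1 else 0)" using prod_indic[OF fin] by auto
    finally show ?thesis unfolding h_def Tplus_def cprod_def using that by simp
  qed
  have P_idx: "P $ k = (if \<forall>A\<in>\<A>. \<not> A \<subseteq> kth_subset t k then 1 else 0)" if "k < 2^t" for k
  proof -
    have "P $ k = (\<Prod>A\<in>\<A>. h A $ k)" unfolding P_def cprod_def using that by simp
    also have "\<dots> = (\<Prod>A\<in>\<A>. if \<not> A \<subseteq> kth_subset t k then 1 else (0::real))"
      using h_idx[OF that] by (intro prod.cong) auto
    also have "\<dots> = (if \<forall>A\<in>\<A>. \<not> A \<subseteq> kth_subset t k then 1 else 0)" using prod_indic[OF finA] by auto
    finally show ?thesis .
  qed
  have Pc: "P \<in> carrier_vec (2^t)" unfolding P_def cprod_def by simp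
  have part1: "gamma t (up t \<A>) = Tplus t - P"
  proof (rule eq_vecI)
    show "dim_vec (gamma t (up t \<A>)) = dim_vec (Tplus t - P)" unfolding gamma_def Tplus_def using Pc by simp
    fix k assume "k < dim_vec (Tplus t - P)"
    then have k: "k < 2^t" unfolding Tplus_def using Pc by simp
    have K: "kth_subset t k \<subseteq> {1..t}" using kth_sub[OF k] .
    have u: "kth_subset t k \<in> up t \<A> \<longleftrightarrow> (\<exists>A\<in>\<A>. A \<subseteq> kth_subset t k)" using K unfolding up_def by auto
    show "gamma t (up t \<A>) $ k = (Tplus t - P) $ k"
      using k Pc u P_idx[OF k] unfolding gamma_idx[OF k] Tplus_def by auto
  qed
  have part2: "gamma t (up t (blocker t \<A>)) = vecmat P (Ubar t)"
  proof (rule eq_vecI)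
    show "dim_vec (gamma t (up t (blocker t \<A>))) = dim_vec (vecmat P (Ubar t))"
      unfolding gamma_def vecmat_def Ubar_def by simp
    fix k assume "k < dim_vec (vecmat P (Ubar t))"
    then have k: "k < 2^t" unfolding vecmat_def Ubar_def by simp
    have k2: "2^t - 1 - k < (2::nat)^t" using k by simp
    have K: "kth_subset t k \<subseteq> {1..t}" using kth_sub[OF k] .
    have u: "kth_subset t k \<in> up t (blocker t \<A>) \<longleftrightarrow> (\<forall>A\<in>\<A>. \<not> A \<subseteq> {1..t} - kth_subset t k)"
      unfolding up_blocker[OF K] using Asub by blast
    show "gamma t (up t (blocker t \<A>)) $ k = vecmat P (Ubar t) $ k"
      unfolding gamma_idx[OF k] vecmat_Ubar[OF Pc k] P_idx[OF k2] kth_rev[OF k] u by simp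
  qed
  show ?thesis using part1 part2 unfolding P_def h_def g_def by simp
qed

end
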